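(* Let $p\ge 3$. Then every $p$-uniform hypertree is $\mathbb{Z}_2\times\mathbb{Z}_2$-cordial.
   Context: A hypergraph $H=(V,E)$ has edges that are non-empty subsets of $V$; it is $p$-uniform if every edge has exactly $p$ vertices. A walk is a sequence $v_0,e_1,v_1,\dots,e_n,v_n$ with $v_i\in V$, $e_i\in E$ and $v_{i-1},v_i\in e_i$; a path is a walk with all $v_i$ distinct and all $e_i$ distinct; a cycle is a walk with at least two edges, all $e_i$ distinct, and all $v_i$ distinct except $v_0=v_n$. A hypergraph is connected if any two vertices are joined by a path. A hypertree is a finite connected hypergraph with no cycles and at least one edge. Let $A=\mathbb{Z}_2\times\mathbb{Z}_2$. For a labeling $c:V\to A$, write $v_c(a)=|c^{-1}(a)|$; $c$ is $A$-friendly if $|v_c(a)-v_c(b)|\le 1$ for all $a,b\in A$. It induces $c^*:E\to A$, $c^*(e)=\sum_{v\in e}c(v)$; write $e_{c^*}(a)=|(c^* )^{-1}(a)|$. $H$ is $A$-cordial if it admits an $A$-friendly labeling $c$ with $|e_{c^*}(a)-e_{c^*}(b)|\le 1$ for all $a,b\in A$. *)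

theory Defs
  imports Main "HOL-Library.Z2" "HOL-Library.Product_Plus"
begin

definition hypergraph :: "'a set \<Rightarrow> 'a set set \<Rightarrow> bool" where
  "hypergraph V E \<longleftrightarrow> (\<forall>e\<in>E. e \<noteq> {} \<and> e \<subseteq> V)"

definition uniform :: "nat \<Rightarrow> 'a set \<Rightarrow> 'a set set \<Rightarrow> bool" where
  "uniform p V E \<longleftrightarrow> (\<forall>e\<in>E. card e = p)"

definition walk :: "'a set \<Rightarrow> 'a set set \<Rightarrow> 'a list \<Rightarrow> 'a set list \<Rightarrow> bool" where
  "walk V E vs es \<longleftrightarrow> length vs = length es + 1 \<and> set vs \<subseteq> V \<and> set es \<subseteq> E \<and>
     (\<forall>i < length es. vs ! i \<in> es ! i \<and> vs ! (i+1) \<in> es ! i)"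

definition hpath :: "'a set \<Rightarrow> 'a set set \<Rightarrow> 'a list \<Rightarrow> 'a set list \<Rightarrow> bool" where
  "hpath V E vs es \<longleftrightarrow> walk V E vs es \<and> distinct vs \<and> distinct es"

definition hcycle :: "'a set \<Rightarrow> 'a set set \<Rightarrow> 'a list \<Rightarrow> 'a set list \<Rightarrow> bool" where
  "hcycle V E vs es \<longleftrightarrow> walk V E vs es \<and> length es \<ge> 2 \<and> distinct es \<and>
     distinct (tl vs) \<and> hd vs = last vs"

definition hconnected :: "'a set \<Rightarrow> 'a set set \<Rightarrow> bool" where
  "hconnected V E \<longleftrightarrow> (\<forall>u\<in>V. \<forall>v\<in>V. \<exists>vs es. hpath V E vs es \<and> hd vs = u \<and> last vs = v)"

definition hypertree :: "'a set \<Rightarrow> 'a set set \<Rightarrow> bool" where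
  "hypertree V E \<longleftrightarrow> finite V \<and> hypergraph V E \<and> hconnected V E \<and>
     (\<nexists>vs es. hcycle V E vs es) \<and> E \<noteq> {}"

type_synonym klein = "bit \<times> bit"

definition vcount :: "'a set \<Rightarrow> ('a \<Rightarrow> klein) \<Rightarrow> klein \<Rightarrow> nat" where
  "vcount V c a = card {v\<in>V. c v = a}"

definition ecount :: "'a set set \<Rightarrow> ('a \<Rightarrow> klein) \<Rightarrow> klein \<Rightarrow> nat" where
  "ecount E c a = card {e\<in>E. (\<Sum>v\<in>e. c v) = a}"

definition A_friendly :: "'a set \<Rightarrow> ('a \<Rightarrow> klein) \<Rightarrow> bool" where
  "A_friendly V c \<longleftrightarrow> (\<forall>a b. \<bar>int (vcount V c a) - int (vcount V c b)\<bar> \<le> 1)"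

definition A_cordial :: "'a set \<Rightarrow> 'a set set \<Rightarrow> bool" where
  "A_cordial V E \<longleftrightarrow> (\<exists>c. A_friendly V c \<and>
     (\<forall>a b. \<bar>int (ecount E c a) - int (ecount E c b)\<bar> \<le> 1))"

lemma "(1::bit) + 1 = 0" by simp
lemma "((1::bit),(0::bit)) + (1,1) = (0,1)" by simp

end

theory Submission
  imports Defs
begin


lemma UNIV_bit: "(UNIV :: bit set) = {0, 1}"
  by (auto intro: bit.exhaust)

lemma UNIV_klein: "(UNIV :: klein set) = {(0,0),(0,1),(1,0),(1,1)}"
  by (auto simp: UNIV_bit intro: bit.exhaust)

lemma finite_klein[simp]: "finite (A :: klein set)"
  by (rule finite_subset[of _ UNIV]) (auto simp: UNIV_klein)

lemma card_klein: "card (UNIV :: klein set) = 4"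
  by (simp add: UNIV_klein zero_prod_def)

lemma bit_add_self[simp]: "(a::bit) + a = 0"
  by (cases a) simp_all

lemma klein_add_self[simp]: "(x::klein) + x = 0"
  by (cases x) (simp add: zero_prod_def)

lemma klein_add_cancel: "(x::klein) + y = x + z \<longleftrightarrow> y = z"
  by (rule add_left_cancel)

lemma klein_minus[simp]: "- (x::klein) = x"
  by (rule add.inverse_unique) simp

lemma sum_UNIV_klein: "(\<Sum>x\<in>(UNIV::klein set). x) = 0"
  by (simp add: UNIV_klein zero_prod_def)


definition conn :: "'a set \<Rightarrow> 'a set set \<Rightarrow> 'a set set \<Rightarrow> 'a set \<Rightarrow> 'a \<Rightarrow> 'a \<Rightarrow> bool" where
  "conn V E F S x y \<longleftrightarrow> (\<exists>vs es. walk V E vs es \<and> distinct vs \<and> distinct es \<and> hd vs = x \<and>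
      last vs = y \<and> set vs \<subseteq> S \<and> set es \<subseteq> F)"

lemma conn_refl:
  assumes "x \<in> S" "x \<in> V" shows "conn V E F S x x"
proof -
  have "walk V E [x] []" using assms unfolding walk_def by auto
  then show ?thesis unfolding conn_def using assms by fastforce
qed

lemma conn_mono: "conn V E F S x y \<Longrightarrow> F \<subseteq> F' \<Longrightarrow> S \<subseteq> S' \<Longrightarrow> conn V E F' S' x y"
  unfolding conn_def by blast

lemma walk_snoc:
  assumes "walk V E vs es" "e \<in> E" "last vs \<in> e" "z \<in> e" "z \<in> V"
  shows "walk V E (vs @ [z]) (es @ [e])"
proof -
  have len: "length vs = length es + 1" and vsV: "set vs \<subseteq> V" and esE: "set es \<subseteq> E"
    and st: "\<forall>i < length es. vs ! i \<in> es ! i \<and> vs ! (i+1) \<in> es ! i"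
    using assms(1) unfolding walk_def by auto
  have ne: "vs \<noteq> []" using len by auto
  have lastn: "vs ! length es = last vs" using ne len by (simp add: last_conv_nth)
  have "\<forall>i < length (es @ [e]). (vs @ [z]) ! i \<in> (es @ [e]) ! i \<and> (vs @ [z]) ! (i + 1) \<in> (es @ [e]) ! i"
  proof (intro allI impI)
    fix i assume i: "i < length (es @ [e])"
    show "(vs @ [z]) ! i \<in> (es @ [e]) ! i \<and> (vs @ [z]) ! (i + 1) \<in> (es @ [e]) ! i"
    proof (cases "i < length es")
      case True
      then show ?thesis using st len by (simp add: nth_append)
    next
      case False
      then have "i = length es" using i by simp
      then show ?thesis using lastn assms len by (simp add: nth_append)
    qed
  qed
  then show ?thesis using len vsV esE assms(2,5) unfolding walk_def by (intro conjI) auto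
qed

lemma walk_cons:
  assumes "walk V E vs es" "e \<in> E" "hd vs \<in> e" "x \<in> e" "x \<in> V"
  shows "walk V E (x # vs) (e # es)"
proof -
  have len: "length vs = length es + 1" and vsV: "set vs \<subseteq> V" and esE: "set es \<subseteq> E"
    and st: "\<forall>i < length es. vs ! i \<in> es ! i \<and> vs ! (i+1) \<in> es ! i"
    using assms(1) unfolding walk_def by auto
  have ne: "vs \<noteq> []" using len by auto
  have "\<forall>i < length (e # es). (x # vs) ! i \<in> (e # es) ! i \<and> (x # vs) ! (i + 1) \<in> (e # es) ! i"
  proof (intro allI impI)
    fix i assume i: "i < length (e # es)"
    show "(x # vs) ! i \<in> (e # es) ! i \<and> (x # vs) ! (i + 1) \<in> (e # es) ! i"
    proof (cases i)
      case 0
      then show ?thesis using assms ne by (simp add: hd_conv_nth)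
    next
      case (Suc j)
      then show ?thesis using st i by simp
    qed
  qed
  then show ?thesis using len vsV esE assms(2,5) unfolding walk_def by (intro conjI) auto
qed


lemma conn_snoc:
  assumes "conn V E F S x y" "e \<in> E" "e \<notin> F" "y \<in> e" "z \<in> e" "z \<notin> S" "z \<in> V"
  shows "conn V E (insert e F) (insert z S) x z"
proof -
  obtain vs es where w: "walk V E vs es" "distinct vs" "distinct es" "hd vs = x" "last vs = y"
    "set vs \<subseteq> S" "set es \<subseteq> F" using assms(1) unfolding conn_def by blast
  have ne: "vs \<noteq> []" using w(1) unfolding walk_def by auto
  have wk: "walk V E (vs @ [z]) (es @ [e])" using walk_snoc[OF w(1) assms(2) _ assms(5,7)] w(5) assms(4) by simp
  show ?thesis unfolding conn_def
    apply (rule exI[of _ "vs @ [z]"], rule exI[of _ "es @ [e]"])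
    using wk w assms ne by auto
qed

lemma conn_cons:
  assumes "conn V E F S y w" "e \<in> E" "e \<notin> F" "y \<in> e" "x \<in> e" "x \<notin> S" "x \<in> V"
  shows "conn V E (insert e F) (insert x S) x w"
proof -
  obtain vs es where w: "walk V E vs es" "distinct vs" "distinct es" "hd vs = y" "last vs = w"
    "set vs \<subseteq> S" "set es \<subseteq> F" using assms(1) unfolding conn_def by blast
  have ne: "vs \<noteq> []" using w(1) unfolding walk_def by auto
  have wk: "walk V E (x # vs) (e # es)" using walk_cons[OF w(1) assms(2) _ assms(5,7)] w(4) assms(4) by simp
  show ?thesis unfolding conn_def
    apply (rule exI[of _ "x # vs"], rule exI[of _ "e # es"])
    using wk w assms ne by auto
qed

lemma conn_edge:
  assumes "e \<in> E" "x \<in> e" "y \<in> e" "x \<noteq> y" "x \<in> V" "y \<in> V" "x \<in> S" "y \<in> S" "e \<in> F"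
  shows "conn V E F S x y"
proof -
  have "walk V E [x,y] [e]" unfolding walk_def using assms by auto
  then show ?thesis unfolding conn_def using assms by fastforce
qed


definition Uo :: "'a \<Rightarrow> 'a set list \<Rightarrow> nat \<Rightarrow> 'a set" where
  "Uo r es k = insert r (\<Union>(set (take k es)))"

definition pre_ok :: "'a set \<Rightarrow> 'a set set \<Rightarrow> 'a \<Rightarrow> 'a set list \<Rightarrow> bool" where
  "pre_ok V E r es \<longleftrightarrow> distinct es \<and> set es \<subseteq> E \<and> (\<forall>i<length es. \<exists>a. es ! i \<inter> Uo r es i = {a})"

lemma Uo_snoc_le: "i \<le> length es \<Longrightarrow> Uo r (es @ [e]) i = Uo r es i"
  unfolding Uo_def by simp

lemma Uo_snoc_last: "Uo r (es @ [e]) (Suc (length es)) = Uo r es (length es) \<union> e"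
  unfolding Uo_def by auto

lemma pre_ok_snoc: "pre_ok V E r (es @ [e]) \<Longrightarrow> pre_ok V E r es"
  unfolding pre_ok_def
  apply (intro conjI)
    apply simp
   apply simp
  apply (intro allI impI)
  subgoal for i
    apply (drule conjunct2, drule conjunct2, drule spec[of _ i])
    by (simp add: Uo_snoc_le nth_append)
  done

lemma Uo_full: "Uo r es (length es) = insert r (\<Union>(set es))"
  unfolding Uo_def by simp

lemma Uo_sub: "hypergraph V E \<Longrightarrow> r \<in> V \<Longrightarrow> set es \<subseteq> E \<Longrightarrow> Uo r es k \<subseteq> V"
  unfolding Uo_def hypergraph_def using set_take_subset by fastforce

lemma conn_pref:
  assumes hg: "hypergraph V E" and rV: "r \<in> V"
  shows "pre_ok V E r es \<Longrightarrow> x \<in> Uo r es (length es) \<Longrightarrow> y \<in> Uo r es (length es)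
    \<Longrightarrow> conn V E (set es) (Uo r es (length es)) x y"
proof (induction es arbitrary: x y rule: rev_induct)
  case Nil
  then show ?case using rV by (simp add: Uo_def conn_refl)
next
  case (snoc e es)
  let ?U = "Uo r es (length es)"
  have ok: "pre_ok V E r es" using snoc.prems(1) by (rule pre_ok_snoc)
  have dist: "e \<notin> set es" and eE: "e \<in> E" using snoc.prems(1) unfolding pre_ok_def by auto
  obtain a where a: "e \<inter> ?U = {a}"
    using snoc.prems(1) unfolding pre_ok_def by (auto simp: Uo_snoc_le nth_append)
  have eV: "e \<subseteq> V" using hg eE unfolding hypergraph_def by auto
  have UV: "?U \<subseteq> V" using Uo_sub[OF hg rV] ok unfolding pre_ok_def by auto
  have U': "Uo r (es @ [e]) (length (es @ [e])) = ?U \<union> e" using Uo_snoc_last by simp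
  have aU: "a \<in> ?U" "a \<in> e" using a by auto
  have IH: "\<And>x y. x \<in> ?U \<Longrightarrow> y \<in> ?U \<Longrightarrow> conn V E (set es) ?U x y" using snoc.IH ok by blast
  have sub1: "insert e (set es) \<subseteq> set (es @ [e])" by auto
  show ?case unfolding U'
  proof -
    have xy: "x \<in> ?U \<union> e" "y \<in> ?U \<union> e" using snoc.prems U' by auto
    show "conn V E (set (es @ [e])) (?U \<union> e) x y"
    proof (cases "x \<in> ?U")
      case xU: True
      show ?thesis
      proof (cases "y \<in> ?U")
        case True
        show ?thesis by (rule conn_mono[OF IH[OF xU True]]) auto
      next
        case False
        then have y: "y \<in> e" "y \<notin> ?U" using xy by auto
        have "conn V E (insert e (set es)) (insert y ?U) x y"
          using conn_snoc[OF IH[OF xU aU(1)] eE dist aU(2) y] eV y by auto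
        then show ?thesis by (rule conn_mono) (use y in auto)
      qed
    next
      case xn: False
      then have x: "x \<in> e" "x \<notin> ?U" using xy by auto
      show ?thesis
      proof (cases "y \<in> ?U")
        case True
        have "conn V E (insert e (set es)) (insert x ?U) x y"
          using conn_cons[OF IH[OF aU(1) True] eE dist aU(2) x] eV x by auto
        then show ?thesis by (rule conn_mono) (use x in auto)
      next
        case False
        then have y: "y \<in> e" using xy by auto
        show ?thesis
        proof (cases "x = y")
          case True
          then show ?thesis using conn_refl[of x "?U \<union> e" V E] x eV by auto
        next
          case False
          show ?thesis by (rule conn_edge[OF eE x(1) y False]) (use x y eV in auto)
        qed
      qed
    qed
  qed
qed

lemma no_cycle_conn:
  assumes ht: "hypertree V E" and c: "conn V E F S u v" and uv: "u \<noteq> v" and eE: "e \<in> E"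
    and eF: "e \<notin> F" and ue: "u \<in> e" and ve: "v \<in> e"
  shows False
proof -
  obtain vs es where w: "walk V E vs es" "distinct vs" "distinct es" "hd vs = u" "last vs = v"
    "set vs \<subseteq> S" "set es \<subseteq> F" using c unfolding conn_def by blast
  have len: "length vs = length es + 1" "set vs \<subseteq> V" using w(1) unfolding walk_def by auto
  obtain vs' where vs: "vs = u # vs'" using w(4) len by (cases vs) auto
  have "vs' \<noteq> []" using vs w(4,5) uv by auto
  then have les: "length es \<ge> 1" using len vs by (cases vs') auto
  have uV: "u \<in> V" using len vs by auto
  have wk: "walk V E (vs @ [u]) (es @ [e])" using walk_snoc[OF w(1) eE _ ue uV] w(5) ve by simp
  have "hcycle V E (vs @ [u]) (es @ [e])"
    unfolding hcycle_def using wk les w eF vs by auto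
  then show False using ht unfolding hypertree_def by blast
qed

lemma frontier:
  assumes ht: "hypertree V E" and rV: "r \<in> V" and sub: "set es \<subseteq> E" and ne: "set es \<noteq> E"
  shows "\<exists>e\<in>E - set es. e \<inter> Uo r es (length es) \<noteq> {}"
proof (rule ccontr)
  let ?S = "Uo r es (length es)"
  assume "\<not> ?thesis"
  then have dis: "\<And>e. e \<in> E \<Longrightarrow> e \<notin> set es \<Longrightarrow> e \<inter> ?S = {}" by blast
  obtain e0 where e0: "e0 \<in> E" "e0 \<notin> set es" using sub ne by auto
  have hg: "hypergraph V E" and hc: "hconnected V E" using ht unfolding hypertree_def by auto
  obtain v where v: "v \<in> e0" using hg e0 unfolding hypergraph_def by auto
  have vV: "v \<in> V" using hg e0 v unfolding hypergraph_def by auto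
  obtain vs pes where p: "hpath V E vs pes" "hd vs = r" "last vs = v"
    using hc rV vV unfolding hconnected_def by blast
  have w: "length vs = length pes + 1" "set pes \<subseteq> E"
    "\<forall>i < length pes. vs ! i \<in> pes ! i \<and> vs ! (i+1) \<in> pes ! i"
    using p(1) unfolding hpath_def walk_def by auto
  have SU: "\<Union>(set es) \<subseteq> ?S" by (auto simp: Uo_full)
  have "\<forall>i \<le> length pes. vs ! i \<in> ?S"
  proof (intro allI impI)
    fix i show "i \<le> length pes \<Longrightarrow> vs ! i \<in> ?S"
    proof (induction i)
      case 0
      have "vs \<noteq> []" using w by auto
      then show ?case using p(2) by (simp add: hd_conv_nth[symmetric] Uo_def)
    next
      case (Suc i)
      then have i: "i < length pes" by simp
      have "vs ! i \<in> ?S" using Suc by simp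
      moreover have "vs ! i \<in> pes ! i" "pes ! i \<in> E" using w i by auto
      ultimately have "pes ! i \<in> set es" using dis by blast
      then have "pes ! i \<subseteq> ?S" using SU by blast
      then show ?case using w(3) i by auto
    qed
  qed
  then have "vs ! length pes \<in> ?S" by simp
  moreover have "vs ! length pes = v" using p(3) w(1)
    by (metis add_diff_cancel_right' last_conv_nth list.size(3) zero_neq_one add_is_0)
  ultimately show False using dis[OF e0] v by blast
qed


lemma finite_E: "hypertree V E \<Longrightarrow> finite E"
  unfolding hypertree_def hypergraph_def
  by (metis Pow_iff finite_Pow_iff finite_subset subsetI)

lemma order_exists:
  assumes ht: "hypertree V E" and rV: "r \<in> V"
  shows "\<exists>es. pre_ok V E r es \<and> set es = E \<and> Uo r es (length es) = V"
proof -
  have hg: "hypergraph V E" and hc: "hconnected V E" using ht unfolding hypertree_def by auto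
  have fE: "finite E" using finite_E[OF ht] .
  have "\<forall>n \<le> card E. \<exists>es. pre_ok V E r es \<and> length es = n"
  proof (intro allI impI)
    fix n show "n \<le> card E \<Longrightarrow> \<exists>es. pre_ok V E r es \<and> length es = n"
    proof (induction n)
      case 0
      then show ?case by (intro exI[of _ "[]"]) (simp add: pre_ok_def)
    next
      case (Suc n)
      then obtain es where es: "pre_ok V E r es" "length es = n" by auto
      let ?U = "Uo r es (length es)"
      have dist: "distinct es" and sub: "set es \<subseteq> E" using es unfolding pre_ok_def by auto
      have "card (set es) = n" using distinct_card[OF dist] es by simp
      then have "set es \<noteq> E" using Suc.prems by auto
      then obtain e where e: "e \<in> E" "e \<notin> set es" "e \<inter> ?U \<noteq> {}"
        using frontier[OF ht rV sub] by blast
      then obtain a where a: "a \<in> e" "a \<in> ?U" by blast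
      have one: "e \<inter> ?U = {a}"
      proof (rule ccontr)
        assume "e \<inter> ?U \<noteq> {a}"
        then obtain b where b: "b \<in> e" "b \<in> ?U" "b \<noteq> a" using a by blast
        have "conn V E (set es) ?U a b" using conn_pref[OF hg rV es(1) a(2) b(2)] .
        then show False using no_cycle_conn[OF ht _ b(3)[symmetric] e(1) e(2) a(1) b(1)] by blast
      qed
      have "pre_ok V E r (es @ [e])"
        unfolding pre_ok_def
      proof (intro conjI allI impI)
        show "distinct (es @ [e])" using dist e by simp
        show "set (es @ [e]) \<subseteq> E" using sub e by simp
        fix i assume i: "i < length (es @ [e])"
        show "\<exists>a. (es @ [e]) ! i \<inter> Uo r (es @ [e]) i = {a}"
        proof (cases "i < length es")
          case True
          then show ?thesis using es(1) unfolding pre_ok_def by (simp add: nth_append Uo_snoc_le)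
        next
          case False
          then have "i = length es" using i by simp
          then show ?thesis using one by (simp add: Uo_snoc_le)
        qed
      qed
      then show ?case using es by (intro exI[of _ "es @ [e]"]) simp
    qed
  qed
  then obtain es where es: "pre_ok V E r es" "length es = card E" by blast
  have dist: "distinct es" and sub: "set es \<subseteq> E" using es unfolding pre_ok_def by auto
  have setE: "set es = E" using card_subset_eq[OF fE sub] distinct_card[OF dist] es(2) by simp
  have "Uo r es (length es) = V"
  proof
    show "Uo r es (length es) \<subseteq> V" using Uo_sub[OF hg rV sub] .
    show "V \<subseteq> Uo r es (length es)"
    proof
      fix v assume vV: "v \<in> V"
      show "v \<in> Uo r es (length es)"
      proof (cases "v = r")
        case True then show ?thesis by (simp add: Uo_def)
      next
        case False
        obtain vs pes where p: "hpath V E vs pes" "hd vs = r" "last vs = v"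
          using hc rV vV unfolding hconnected_def by blast
        have w: "length vs = length pes + 1" "set pes \<subseteq> E"
          "\<forall>i < length pes. vs ! i \<in> pes ! i \<and> vs ! (i+1) \<in> pes ! i"
          using p(1) unfolding hpath_def walk_def by auto
        have "pes \<noteq> []" using w(1) p(2,3) False by (cases vs) auto
        then obtain j where j: "Suc j = length pes" by (cases "length pes") auto
        have "vs \<noteq> []" using w(1) by auto
        then have "vs ! Suc j = v" using p(3) w(1) j by (simp add: last_conv_nth)
        then have "v \<in> pes ! j" using w(3) j by (metis Suc_eq_plus1 lessI)
        moreover have "pes ! j \<in> E" using w(2) j by (metis lessI nth_mem subsetD)
        ultimately show ?thesis using setE by (auto simp: Uo_full)
      qed
    qed
  qed
  then show ?thesis using es setE by blast
qed


definition vc :: "('a \<Rightarrow> klein) \<Rightarrow> 'a set \<Rightarrow> klein \<Rightarrow> nat" where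
  "vc c S x = card {v\<in>S. c v = x}"

definition ec :: "('a \<Rightarrow> klein) \<Rightarrow> 'a set set \<Rightarrow> klein \<Rightarrow> nat" where
  "ec c F x = card {e\<in>F. sum c e = x}"

definition BalF :: "(klein \<Rightarrow> nat) \<Rightarrow> nat \<Rightarrow> klein set \<Rightarrow> bool" where
  "BalF f N H \<longleftrightarrow> card H = N mod 4 \<and> (\<forall>x. f x = N div 4 + of_bool (x \<in> H))"

definition sc :: "nat \<Rightarrow> klein \<Rightarrow> klein" where
  "sc n x = (if odd n then x else 0)"

lemma sc_add: "sc (a + b) x = sc a x + sc b x"
  unfolding sc_def by auto

lemma sc_Suc: "sc (Suc n) x = sc n x + x"
  using sc_add[of n 1 x] by (simp add: sc_def)

lemma vc_empty[simp]: "vc f {} x = 0"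
  unfolding vc_def by simp

lemma vc_insert:
  assumes "finite S" "s \<notin> S"
  shows "vc f (insert s S) x = vc f S x + of_bool (f s = x)"
proof (cases "f s = x")
  case True
  then have "{v \<in> insert s S. f v = x} = insert s {v\<in>S. f v = x}" by auto
  then show ?thesis using assms True unfolding vc_def by simp
next
  case False
  then have "{v \<in> insert s S. f v = x} = {v\<in>S. f v = x}" by auto
  then show ?thesis using False unfolding vc_def by simp
qed

lemma vc_Un:
  assumes "finite A" "finite B" "A \<inter> B = {}"
  shows "vc f (A \<union> B) x = vc f A x + vc f B x"
proof -
  have "{v \<in> A \<union> B. f v = x} = {v\<in>A. f v = x} \<union> {v\<in>B. f v = x}" by auto
  then show ?thesis unfolding vc_def using assms by (simp add: card_Un_disjoint disjoint_iff)
qed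

lemma vc_cong: "(\<And>v. v \<in> S \<Longrightarrow> f v = g v) \<Longrightarrow> vc f S x = vc g S x"
  unfolding vc_def by (metis (mono_tags, lifting) mem_Collect_eq Collect_cong)

lemma sum_vc: "finite S \<Longrightarrow> (\<Sum>x\<in>UNIV. vc f S x) = card S"
proof (induction S rule: finite_induct)
  case empty then show ?case by simp
next
  case (insert s S)
  have "(\<Sum>x\<in>UNIV. vc f (insert s S) x) = (\<Sum>x\<in>UNIV. vc f S x + of_bool (f s = x))"
    using vc_insert[OF insert(1,2)] by simp
  also have "\<dots> = card S + 1" using insert by (simp add: sum.distrib)
  finally show ?case using insert by simp
qed

lemma sum_sc: "finite S \<Longrightarrow> sum f S = (\<Sum>x\<in>UNIV. sc (vc f S x) x)"
proof (induction S rule: finite_induct)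
  case empty then show ?case by (simp add: sc_def)
next
  case (insert s S)
  have "(\<Sum>x\<in>UNIV. sc (vc f (insert s S) x) x) = (\<Sum>x\<in>UNIV. sc (vc f S x) x + sc (of_bool (f s = x)) x)"
    using vc_insert[OF insert(1,2)] by (simp add: sc_add)
  also have "\<dots> = sum f S + (\<Sum>x\<in>UNIV. sc (of_bool (f s = x)) x)"
    using insert by (simp add: sum.distrib)
  also have "(\<Sum>x\<in>UNIV. sc (of_bool (f s = x)) x) = (\<Sum>x\<in>UNIV. if x = f s then x else 0)"
    by (rule sum.cong) (auto simp: sc_def)
  also have "\<dots> = f s" by simp
  finally show ?case using insert by (simp add: add.commute)
qed

lemma realize:
  "finite S \<Longrightarrow> (\<Sum>x\<in>UNIV. M x) = card S \<Longrightarrow> \<exists>f. \<forall>x. vc f S x = M x"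
proof (induction S arbitrary: M rule: finite_induct)
  case empty
  then have "\<forall>x. M x = 0" by simp
  then show ?case by simp
next
  case (insert s S)
  have "(\<Sum>x\<in>UNIV. M x) > 0" using insert by simp
  then obtain x0 where x0: "M x0 > 0" by (metis sum.neutral neq0_conv)
  let ?M' = "M(x0 := M x0 - 1)"
  have "(\<Sum>x\<in>UNIV. M x) = M x0 + (\<Sum>x\<in>UNIV - {x0}. M x)"
    by (rule sum.remove) auto
  moreover have "(\<Sum>x\<in>UNIV. ?M' x) = ?M' x0 + (\<Sum>x\<in>UNIV - {x0}. ?M' x)"
    by (rule sum.remove) auto
  moreover have "(\<Sum>x\<in>UNIV - {x0}. ?M' x) = (\<Sum>x\<in>UNIV - {x0}. M x)"
    by (rule sum.cong) auto
  ultimately have "(\<Sum>x\<in>UNIV. ?M' x) = card S" using insert x0 by simp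
  then obtain f where f: "\<forall>x. vc f S x = ?M' x" using insert.IH by blast
  define g where "g = f(s := x0)"
  have gs: "g s = x0" and gS: "\<And>v. v \<in> S \<Longrightarrow> g v = f v" using insert(2) by (auto simp: g_def)
  have "\<forall>x. vc g (insert s S) x = M x"
  proof
    fix x
    have "vc g (insert s S) x = vc g S x + of_bool (x0 = x)"
      using vc_insert[OF insert(1,2), of g x] gs by simp
    also have "vc g S x = vc f S x" by (rule vc_cong) (use gS in auto)
    finally have "vc g (insert s S) x = ?M' x + of_bool (x0 = x)" using f by simp
    then show "vc g (insert s S) x = M x" using x0 by (cases "x = x0") auto
  qed
  then show ?case by blast
qed

lemma realize_des:
  assumes fB: "finite B" and DB: "D \<subseteq> B" and le: "\<forall>x. vc d D x \<le> M x"
    and sM: "(\<Sum>x\<in>UNIV. M x) = card B"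
  shows "\<exists>f. (\<forall>v\<in>D. f v = d v) \<and> (\<forall>x. vc f B x = M x)"
proof -
  have fD: "finite D" using fB DB finite_subset by blast
  have "(\<Sum>x\<in>UNIV. M x - vc d D x) = (\<Sum>x\<in>UNIV. M x) - (\<Sum>x\<in>UNIV. vc d D x)"
    by (rule sum_subtractf_nat) (use le in auto)
  also have "\<dots> = card (B - D)" unfolding sM sum_vc[OF fD] card_Diff_subset[OF fD DB] ..
  finally obtain g where g: "\<forall>x. vc g (B - D) x = M x - vc d D x"
    using realize[of "B - D"] fB by blast
  define f where "f = (\<lambda>v. if v \<in> D then d v else g v)"
  have fD': "\<And>v. v \<in> D \<Longrightarrow> f v = d v" and fG: "\<And>v. v \<in> B - D \<Longrightarrow> f v = g v"
    by (auto simp: f_def)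
  have Bu: "B = D \<union> (B - D)" using DB by auto
  have fBD: "finite (B - D)" using fB by simp
  have dis: "D \<inter> (B - D) = {}" by auto
  have "\<forall>x. vc f B x = M x"
  proof
    fix x
    have "vc f B x = vc f (D \<union> (B - D)) x" using Bu by simp
    also have "\<dots> = vc f D x + vc f (B - D) x" by (rule vc_Un[OF fD fBD dis])
    also have "vc f D x = vc d D x" by (rule vc_cong) (rule fD')
    also have "vc f (B - D) x = vc g (B - D) x" by (rule vc_cong) (rule fG)
    finally have "vc f B x = vc d D x + (M x - vc d D x)" using g by simp
    then show "vc f B x = M x" using le by simp
  qed
  then show ?thesis using fD' by blast
qed


lemma card_UNIV_klein_subset: "card (H::klein set) \<le> 4"
  using card_mono[of UNIV H] by (simp add: card_klein)

lemma card4_UNIV: "card (H::klein set) = 4 \<Longrightarrow> H = UNIV"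
  by (metis card_klein card_subset_eq finite_klein subset_UNIV)

lemma sum_if_in: "(\<Sum>x\<in>UNIV. if x \<in> H then x else (0::klein)) = \<Sum>H"
  using sum.inter_restrict[of UNIV "\<lambda>x. x" H] by simp

lemma sum_sc_const: "(\<Sum>x\<in>(UNIV::klein set). sc K x) = 0"
  unfolding sc_def by (cases "odd K") (auto simp: sum_UNIV_klein)

lemma parity_sum:
  fixes a b :: "klein \<Rightarrow> nat"
  assumes le: "\<forall>x. b x \<le> a x" and ha: "\<forall>x. a x = K' + of_bool (x \<in> H')"
    and hb: "\<forall>x. b x = K + of_bool (x \<in> H)"
  shows "(\<Sum>x\<in>UNIV. sc (a x - b x) x) = \<Sum>H + \<Sum>H'"
proof -
  have e1: "\<And>x. sc (a x - b x) x = sc (a x) x + sc (b x) x"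
  proof -
    fix x
    have "sc (a x) x = sc (a x - b x) x + sc (b x) x" using sc_add[of "a x - b x" "b x" x] le by simp
    then show "sc (a x - b x) x = sc (a x) x + sc (b x) x" by (simp add: add.assoc)
  qed
  have e2: "\<And>K H x. sc (K + of_bool (x \<in> H)) x = sc K x + (if x \<in> H then x else 0)"
    by (simp add: sc_add sc_def)
  have "(\<Sum>x\<in>UNIV. sc (a x - b x) x) = (\<Sum>x\<in>UNIV. sc (a x) x) + (\<Sum>x\<in>UNIV. sc (b x) x)"
    using e1 by (simp add: sum.distrib)
  also have "(\<Sum>x\<in>UNIV. sc (a x) x) = (\<Sum>x\<in>UNIV. sc K' x + (if x \<in> H' then x else 0))"
    by (rule sum.cong) (simp_all add: ha e2)
  also have "\<dots> = \<Sum>H'" by (simp add: sum.distrib sum_sc_const sum_if_in)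
  also have "(\<Sum>x\<in>UNIV. sc (b x) x) = (\<Sum>x\<in>UNIV. sc K x + (if x \<in> H then x else 0))"
    by (rule sum.cong) (simp_all add: hb e2)
  also have "\<dots> = \<Sum>H" by (simp add: sum.distrib sum_sc_const sum_if_in)
  finally show ?thesis by (simp add: add.commute)
qed

definition HEnext :: "klein set \<Rightarrow> klein \<Rightarrow> klein set" where
  "HEnext HE l = (if card HE = 3 then {} else insert l HE)"

lemma bal_add_one:
  assumes b: "BalF f m HE" and l: "l \<notin> HE"
  shows "BalF (\<lambda>x. f x + of_bool (l = x)) (Suc m) (HEnext HE l)"
proof (cases "card HE = 3")
  case True
  then have m3: "m mod 4 = 3" using b unfolding BalF_def by simp
  have "card (insert l HE) = 4" using True l by (simp add: card_insert_disjoint)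
  then have U: "insert l HE = UNIV" by (rule card4_UNIV)
  have d: "Suc m div 4 = m div 4 + 1" "Suc m mod 4 = 0" using m3 by presburger+
  show ?thesis unfolding BalF_def HEnext_def using True d b U l unfolding BalF_def
    by (auto simp: of_bool_def)
next
  case False
  then have lt: "card HE < 3" using b card_UNIV_klein_subset[of HE] unfolding BalF_def by (auto)
  then have m3: "m mod 4 < 3" using b unfolding BalF_def by simp
  have d: "Suc m div 4 = m div 4" "Suc m mod 4 = m mod 4 + 1" using m3 by presburger+
  have c: "card (insert l HE) = card HE + 1" using l by (simp add: card_insert_disjoint)
  show ?thesis unfolding BalF_def HEnext_def using False d b c l unfolding BalF_def
    by (auto simp: of_bool_def)
qed


locale tord =
  fixes V :: "'a set" and E :: "'a set set" and r :: 'a and es :: "'a set list" and q :: nat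
  assumes hg: "hypergraph V E" and rV: "r \<in> V" and ok: "pre_ok V E r es"
    and cardq: "\<And>e. e \<in> set es \<Longrightarrow> card e = Suc q" and finV: "finite V"
begin

abbreviation "U \<equiv> Uo r es"

definition att :: "nat \<Rightarrow> 'a" where "att k = (THE a. es ! k \<inter> U k = {a})"

definition Bk :: "nat \<Rightarrow> 'a set" where "Bk k = es ! k - U k"

definition Inv :: "nat \<Rightarrow> ('a \<Rightarrow> klein) \<Rightarrow> klein set \<Rightarrow> klein set \<Rightarrow> bool" where
  "Inv k c H HE \<longleftrightarrow> BalF (vc c (U k)) (card (U k)) H \<and> BalF (ec c (set (take k es))) k HE"

lemma subE: "set es \<subseteq> E" using ok unfolding pre_ok_def by auto
lemma dist: "distinct es" using ok unfolding pre_ok_def by auto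

lemma UV: "U k \<subseteq> V" using Uo_sub[OF hg rV subE] .
lemma finU[simp]: "finite (U k)" using UV finV finite_subset by blast

lemma esk_in: "k < length es \<Longrightarrow> es ! k \<in> set es" by simp

lemma att: "k < length es \<Longrightarrow> es ! k \<inter> U k = {att k}"
proof -
  assume k: "k < length es"
  then obtain a where a: "es ! k \<inter> U k = {a}" using ok unfolding pre_ok_def by blast
  then have "att k = a" unfolding att_def by auto
  then show ?thesis using a by simp
qed

lemma attU: "k < length es \<Longrightarrow> att k \<in> U k"
proof -
  assume "k < length es" then have "es ! k \<inter> U k = {att k}" by (rule att)
  then show ?thesis by blast
qed
lemma att_e: "k < length es \<Longrightarrow> att k \<in> es ! k"
proof -
  assume "k < length es" then have "es ! k \<inter> U k = {att k}" by (rule att)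
  then show ?thesis by blast
qed

lemma Bk_disj: "Bk k \<inter> U k = {}" unfolding Bk_def by auto
lemma att_notin_Bk: "k < length es \<Longrightarrow> att k \<notin> Bk k" unfolding Bk_def using attU by auto
lemma esk_eq: "k < length es \<Longrightarrow> es ! k = insert (att k) (Bk k)"
  unfolding Bk_def using att by blast
lemma finBk[simp]: "k < length es \<Longrightarrow> finite (Bk k)"
  using hg subE finV unfolding Bk_def hypergraph_def
  by (metis finite_Diff finite_subset nth_mem subsetD)
lemma cardBk: "k < length es \<Longrightarrow> card (Bk k) = q"
proof -
  assume k: "k < length es"
  have "card (es ! k) = Suc q" using cardq k by simp
  moreover have "finite (Bk k)" using k by simp
  ultimately show ?thesis using esk_eq[OF k] att_notin_Bk[OF k] by (simp add: card_insert_disjoint)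
qed

lemma U_Suc: "k < length es \<Longrightarrow> U (Suc k) = U k \<union> Bk k"
  unfolding Bk_def Uo_def by (auto simp: take_Suc_conv_app_nth)

lemma card_U: "k \<le> length es \<Longrightarrow> card (U k) = 1 + k * q"
proof (induction k)
  case 0 then show ?case by (simp add: Uo_def)
next
  case (Suc k)
  then have k: "k < length es" by simp
  have "card (U (Suc k)) = card (U k) + card (Bk k)"
    using U_Suc[OF k] Bk_disj card_Un_disjoint[of "U k" "Bk k"] k by (simp add: Int_commute)
  then show ?case using Suc cardBk[OF k] by simp
qed

lemma take_Suc_set: "k < length es \<Longrightarrow> set (take (Suc k) es) = insert (es ! k) (set (take k es))"
  by (auto simp: take_Suc_conv_app_nth)

lemma esk_notin: "k < length es \<Longrightarrow> es ! k \<notin> set (take k es)"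
proof
  assume k: "k < length es" and i: "es ! k \<in> set (take k es)"
  then obtain j where j: "j < length (take k es)" "take k es ! j = es ! k" by (auto simp: in_set_conv_nth)
  then have "j < k" "es ! j = es ! k" by auto
  then show False using dist k nth_eq_iff_index_eq[of es j k] by auto
qed

end


definition Mf :: "nat \<Rightarrow> nat \<Rightarrow> klein set \<Rightarrow> klein set \<Rightarrow> klein \<Rightarrow> nat" where
  "Mf N q H H' x = ((N + q) div 4 + of_bool (x \<in> H')) - (N div 4 + of_bool (x \<in> H))"

lemma sum_const_bool: "(\<Sum>x\<in>(UNIV::klein set). K + of_bool (x \<in> H)) = 4 * K + card H"
  by (simp add: sum.distrib card_klein)

lemma div_split4: "(N + q) div 4 = N div 4 + (N mod 4 + q) div 4" for N q :: nat
  by presburger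

context tord begin

lemma take_sub_U: "e \<in> set (take k es) \<Longrightarrow> e \<subseteq> U k"
  unfolding Uo_def by auto

lemma step:
  assumes k: "k < length es" and inv: "Inv k c H HE"
    and cH': "card H' = (card (U k) + q) mod 4"
    and cont: "card (U k) mod 4 + q \<ge> 4 \<or> H \<subseteq> H'"
    and lnot: "c (att k) + \<Sum>H + \<Sum>H' \<notin> HE"
    and DB: "D \<subseteq> Bk k" and des: "\<forall>x. vc d D x \<le> Mf (card (U k)) q H H' x"
  shows "\<exists>c'. (\<forall>v\<in>U k. c' v = c v) \<and> (\<forall>v\<in>D. c' v = d v) \<and>
            Inv (Suc k) c' H' (HEnext HE (c (att k) + \<Sum>H + \<Sum>H'))"
proof -
  define N where "N = card (U k)"
  define l where "l = c (att k) + \<Sum>H + \<Sum>H'"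
  have bv: "BalF (vc c (U k)) N H" and be: "BalF (ec c (set (take k es))) k HE"
    using inv unfolding Inv_def N_def by auto
  have cH: "card H = N mod 4" using bv unfolding BalF_def by simp
  have nonneg: "\<forall>x. N div 4 + of_bool (x \<in> H) \<le> (N + q) div 4 + of_bool (x \<in> H')"
  proof
    fix x
    show "N div 4 + of_bool (x \<in> H) \<le> (N + q) div 4 + of_bool (x \<in> H')"
    proof (cases "N mod 4 + q \<ge> 4")
      case True
      then have "(N + q) div 4 \<ge> N div 4 + 1" using div_split4[of N q] by simp
      then show ?thesis by simp
    next
      case False
      then have "H \<subseteq> H'" using cont unfolding N_def by simp
      moreover have "(N + q) div 4 = N div 4" using div_split4[of N q] False by simp
      ultimately show ?thesis by auto
    qed
  qed
  have sumM: "(\<Sum>x\<in>UNIV. Mf N q H H' x) = q"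
  proof -
    have "(\<Sum>x\<in>UNIV. Mf N q H H' x) =
        (\<Sum>x\<in>UNIV. (N + q) div 4 + of_bool (x \<in> H')) - (\<Sum>x\<in>UNIV. N div 4 + of_bool (x \<in> H))"
      unfolding Mf_def by (rule sum_subtractf_nat) (rule nonneg[rule_format])
    also have "\<dots> = (4 * ((N + q) div 4) + card H') - (4 * (N div 4) + card H)"
      by (simp only: sum_const_bool)
    also have "\<dots> = q" using cH cH' unfolding N_def[symmetric] by simp
    finally show ?thesis .
  qed
  obtain f where f1: "\<forall>v\<in>D. f v = d v" and f2: "\<forall>x. vc f (Bk k) x = Mf N q H H' x"
    using realize_des[OF finBk[OF k] DB, of d "Mf N q H H'"] des sumM cardBk[OF k] unfolding N_def
    by auto
  define c' where "c' = (\<lambda>v. if v \<in> Bk k then f v else c v)"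
  have c'U: "\<forall>v\<in>U k. c' v = c v" using Bk_disj unfolding c'_def by auto
  have c'B: "\<And>v. v \<in> Bk k \<Longrightarrow> c' v = f v" unfolding c'_def by auto
  have c'D: "\<forall>v\<in>D. c' v = d v" using DB f1 c'B by auto
  have cardU': "card (U (Suc k)) = N + q"
    using card_U[of k] card_U[of "Suc k"] k unfolding N_def by simp
  have vcount: "\<forall>x. vc c' (U (Suc k)) x = (N + q) div 4 + of_bool (x \<in> H')"
  proof
    fix x
    have "vc c' (U (Suc k)) x = vc c' (U k) x + vc c' (Bk k) x"
      unfolding U_Suc[OF k] by (rule vc_Un) (use Bk_disj k in auto)
    also have "vc c' (U k) x = vc c (U k) x" by (rule vc_cong) (use c'U in auto)
    also have "vc c' (Bk k) x = vc f (Bk k) x" by (rule vc_cong) (use c'B in auto)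
    also have "vc c (U k) x = N div 4 + of_bool (x \<in> H)" using bv unfolding BalF_def by blast
    also have "vc f (Bk k) x = Mf N q H H' x" by (simp add: f2[rule_format])
    finally show "vc c' (U (Suc k)) x = (N + q) div 4 + of_bool (x \<in> H')"
      using nonneg unfolding Mf_def by (metis le_add_diff_inverse)
  qed
  have BV: "BalF (vc c' (U (Suc k))) (card (U (Suc k))) H'"
    unfolding BalF_def cardU' using vcount cH' unfolding N_def by simp
  have esum: "sum c' (es ! k) = l"
  proof -
    have "sum c' (es ! k) = c' (att k) + sum c' (Bk k)"
      unfolding esk_eq[OF k] by (rule sum.insert) (use k att_notin_Bk in auto)
    also have "c' (att k) = c (att k)" using c'U attU[OF k] by auto
    also have "sum c' (Bk k) = sum f (Bk k)" by (rule sum.cong) (use c'B in auto)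
    also have "sum f (Bk k) = (\<Sum>x\<in>UNIV. sc (vc f (Bk k) x) x)" using sum_sc[OF finBk[OF k]] .
    also have "\<dots> = (\<Sum>x\<in>UNIV. sc (Mf N q H H' x) x)" by (simp add: f2[rule_format])
    also have "\<dots> = \<Sum>H + \<Sum>H'" unfolding Mf_def
      by (rule parity_sum[where K'="(N + q) div 4" and K="N div 4"]) (use nonneg in auto)
    finally show ?thesis unfolding l_def by (simp add: add.assoc)
  qed
  have ecount: "\<forall>x. ec c' (set (take (Suc k) es)) x = ec c (set (take k es)) x + of_bool (l = x)"
  proof
    fix x
    have same: "\<And>e. e \<in> set (take k es) \<Longrightarrow> sum c' e = sum c e"
      using take_sub_U c'U by (meson subsetD sum.cong)
    have "{e \<in> set (take (Suc k) es). sum c' e = x} =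
          (if l = x then insert (es ! k) else (\<lambda>S. S)) {e \<in> set (take k es). sum c e = x}"
      unfolding take_Suc_set[OF k] using esum same by auto
    then show "ec c' (set (take (Suc k) es)) x = ec c (set (take k es)) x + of_bool (l = x)"
      unfolding ec_def using esk_notin[OF k] by (auto simp: card_insert_disjoint)
  qed
  have BE: "BalF (ec c' (set (take (Suc k) es))) (Suc k) (HEnext HE l)"
  proof -
    have "BalF (\<lambda>x. ec c (set (take k es)) x + of_bool (l = x)) (Suc k) (HEnext HE l)"
      by (rule bal_add_one[OF be]) (use lnot l_def in simp)
    moreover have "ec c' (set (take (Suc k) es)) = (\<lambda>x. ec c (set (take k es)) x + of_bool (l = x))"
      using ecount by auto
    ultimately show ?thesis by simp
  qed
  show ?thesis using BV BE c'U c'D unfolding Inv_def l_def by blast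
qed

end


lemma avoid: "card (F::klein set) < 4 \<Longrightarrow> \<exists>y. y \<notin> F"
proof (rule ccontr)
  assume a: "card F < 4" and "\<not> (\<exists>y. y \<notin> F)"
  then have "F = UNIV" by blast
  then show False using a card_klein by simp
qed

lemma klein_cancel_r: "(s::klein) + (s + y) = y"
  by (simp add: add.assoc[symmetric])

lemma trans_avoid:
  assumes "y \<notin> (\<lambda>z. z + s) ` HE" shows "s + y \<notin> (HE::klein set)"
proof
  assume "s + y \<in> HE"
  then have "(s + y) + s \<in> (\<lambda>z. z + s) ` HE" by blast
  moreover have "(s + y) + s = y" using klein_cancel_r[of s y] by (simp add: add.commute)
  ultimately show False using assms by simp
qed

lemma card_trans: "card ((\<lambda>z. z + s) ` (HE::klein set)) \<le> card HE"
  by (rule card_image_le) simp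

lemma sum_compl1: "\<Sum>(UNIV - {y::klein}) = y"
proof -
  have "\<Sum>(UNIV::klein set) = y + \<Sum>(UNIV - {y})" by (rule sum.remove) auto
  then have "y + \<Sum>(UNIV - {y}) = 0" using sum_UNIV_klein by simp
  then have "y + (y + \<Sum>(UNIV - {y})) = y + 0" by simp
  then show ?thesis using klein_cancel_r[of y] by simp
qed

lemma card_compl1: "card (UNIV - {y::klein}) = 3"
  by (simp add: card_klein)

definition good :: "nat \<Rightarrow> nat \<Rightarrow> nat \<Rightarrow> bool" where
  "good h g q \<longleftrightarrow> (h + q) mod 4 = 1 \<or> ((h + q) mod 4 = 2 \<and> g \<le> 2) \<or>
     ((h + q) mod 4 = 3 \<and> g + h \<le> 3) \<or> ((h + q) mod 4 = 0 \<and> g = 0)"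

lemma choose_single:
  assumes cH: "card (H::klein set) = h" and cHE: "card HE = g" and q: "q \<ge> 2" and gd: "good h g q"
    and g4: "g < 4"
  shows "\<exists>H'. card H' = (h + q) mod 4 \<and> (h + q \<ge> 4 \<or> H \<subseteq> H') \<and> t + \<Sum>H + \<Sum>H' \<notin> HE"
proof -
  define s where "s = t + \<Sum>H"
  define Tr where "Tr = (\<lambda>z. z + s) ` HE"
  have cTr: "card Tr \<le> g" using card_trans[of s HE] cHE unfolding Tr_def by simp
  have key: "\<And>y. y \<notin> Tr \<Longrightarrow> s + y \<notin> HE" using trans_avoid unfolding Tr_def by blast
  consider "(h + q) mod 4 = 1" | "(h + q) mod 4 = 2" "g \<le> 2" | "(h + q) mod 4 = 3" "g + h \<le> 3"
    | "(h + q) mod 4 = 0" "g = 0" using gd unfolding good_def by auto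
  then show ?thesis
  proof cases
    case 1
    have "card Tr < 4" using cTr g4 by simp
    then obtain y where y: "y \<notin> Tr" using avoid by blast
    have "h + q \<ge> 4" using 1 q by presburger
    then show ?thesis using key[OF y] 1 by (intro exI[of _ "{y}"]) (simp add: s_def add.assoc)
  next
    case 2
    have "card (insert 0 Tr) \<le> Suc (card Tr)" by (simp add: card_insert_if)
    then have "card (insert 0 Tr) < 4" using cTr 2 by simp
    then obtain y where y: "y \<notin> insert 0 Tr" using avoid by blast
    have cont: "h + q \<ge> 4 \<or> H \<subseteq> {0, y}"
    proof (cases "h + q \<ge> 4")
      case False
      then have "h = 0" using 2 q by presburger
      then have "H = {}" using cH by simp
      then show ?thesis by simp
    qed simp
    have "card {0, y} = 2" using y by simp
    moreover have "\<Sum>{0, y} = y" using y by simp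
    ultimately show ?thesis using key[of y] y cont 2 by (intro exI[of _ "{0, y}"]) (simp add: s_def add.assoc)
  next
    case 3
    have "card (Tr \<union> H) \<le> card Tr + card H" by (rule card_Un_le)
    then have "card (Tr \<union> H) < 4" using cTr cH 3 by simp
    then obtain y where y: "y \<notin> Tr \<union> H" using avoid by blast
    have "H \<subseteq> UNIV - {y}" using y by auto
    then show ?thesis using key[of y] y 3 sum_compl1[of y] card_compl1[of y]
      by (intro exI[of _ "UNIV - {y}"]) (simp add: s_def add.assoc)
  next
    case 4
    then have "HE = {}" using cHE by simp
    moreover have "h + q \<ge> 4" using 4 q by presburger
    ultimately show ?thesis using 4 by (intro exI[of _ "{}"]) simp
  qed
qed


lemma mod_expand: "(1 + k * q) mod 4 = (1 + (k mod 4) * (q mod 4)) mod 4" for k q :: nat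
proof -
  have "(1 + k * q) mod 4 = (1 + (k * q) mod 4) mod 4" by (rule mod_add_right_eq[symmetric])
  also have "(k * q) mod 4 = (k mod 4 * (q mod 4)) mod 4" by (rule mod_mult_eq[symmetric])
  also have "(1 + (k mod 4 * (q mod 4)) mod 4) mod 4 = (1 + k mod 4 * (q mod 4)) mod 4"
    by (rule mod_add_right_eq)
  finally show ?thesis .
qed

lemma lt4: "(i::nat) < 4 \<Longrightarrow> i = 0 \<or> i = 1 \<or> i = 2 \<or> i = 3" by auto

lemma good_table:
  "i<(4::nat) \<Longrightarrow> j<(4::nat) \<Longrightarrow> \<not> (j = 1 \<and> i = 2) \<Longrightarrow>
    (((1 + i * j) mod 4 + j) mod 4 = 1 \<or> (((1 + i * j) mod 4 + j) mod 4 = 2 \<and> i \<le> 2) \<or>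
     (((1 + i * j) mod 4 + j) mod 4 = 3 \<and> i + (1 + i * j) mod 4 \<le> 3) \<or>
     (((1 + i * j) mod 4 + j) mod 4 = 0 \<and> i = 0))"
  apply (drule lt4, drule lt4)
  apply (elim disjE)
  apply simp_all
  done

lemma good_arith:
  assumes q: "q \<ge> 2" and nb: "\<not> (q mod 4 = 1 \<and> k mod 4 = 2)"
  shows "good ((1 + k * q) mod 4) (k mod 4) q"
proof -
  define i where "i = k mod 4"
  define j where "j = q mod 4"
  have h: "(1 + k * q) mod 4 = (1 + i * j) mod 4" using mod_expand unfolding i_def j_def by simp
  have hq: "((1 + k * q) mod 4 + q) mod 4 = ((1 + i * j) mod 4 + j) mod 4"
    unfolding h j_def by (rule mod_add_right_eq[symmetric])
  have "i < 4" "j < 4" unfolding i_def j_def by auto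
  then have "((1 + i * j) mod 4 + j) mod 4 = 1 \<or> (((1 + i * j) mod 4 + j) mod 4 = 2 \<and> i \<le> 2) \<or>
     (((1 + i * j) mod 4 + j) mod 4 = 3 \<and> i + (1 + i * j) mod 4 \<le> 3) \<or>
     (((1 + i * j) mod 4 + j) mod 4 = 0 \<and> i = 0)"
    using good_table[of i j] nb unfolding i_def[symmetric] j_def[symmetric] by blast
  then show ?thesis unfolding good_def hq unfolding h i_def[symmetric] by simp
qed


lemma vc_le_card: "finite D \<Longrightarrow> vc d D x \<le> card D"
  unfolding vc_def by (rule card_mono) auto

lemma Mf1:
  assumes "N mod 4 = 1" "q \<ge> 3" "u \<noteq> z"
  shows "Mf N q {z} {z, u} x \<ge> 1" "Mf N q {z} {z, u} u \<ge> 2"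
proof -
  have "(N + q) div 4 \<ge> N div 4 + 1" using div_split4[of N q] assms by simp
  then show "Mf N q {z} {z, u} x \<ge> 1" "Mf N q {z} {z, u} u \<ge> 2"
    unfolding Mf_def using assms(3) by auto
qed

lemma Mf2:
  assumes "N mod 4 = 2" "q \<ge> 2" "x \<noteq> w"
  shows "Mf N q H (UNIV - {w}) x \<ge> 1"
proof -
  have "(N + q) div 4 \<ge> N div 4 + 1" using div_split4[of N q] assms by simp
  then show ?thesis unfolding Mf_def using assms(3) by (cases "x \<in> H") auto
qed

lemma sum2: "u \<noteq> z \<Longrightarrow> \<Sum>{z, u::klein} = z + u" by simp

context tord begin

lemma step1:
  assumes k: "k < length es" and inv: "Inv k c {z} {}" and N: "card (U k) mod 4 = 1"
    and q: "q mod 4 = 1" "q \<ge> 3" and uz: "u \<noteq> z" and DB: "D \<subseteq> Bk k"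
    and des: "\<forall>x. vc d D x \<le> Mf (card (U k)) q {z} {z, u} x"
  shows "\<exists>c1. (\<forall>v\<in>U k. c1 v = c v) \<and> (\<forall>v\<in>D. c1 v = d v) \<and> Inv (Suc k) c1 {z, u} {c (att k) + u}"
proof -
  have cH': "card {z, u} = (card (U k) + q) mod 4" using uz N q by (simp add: mod_add_eq[symmetric])
  have l: "c (att k) + \<Sum>{z} + \<Sum>{z, u} = c (att k) + u"
    using uz by (simp add: add.assoc klein_cancel_r)
  have cont: "card (U k) mod 4 + q \<ge> 4 \<or> {z} \<subseteq> {z, u}" by simp
  have ln: "c (att k) + \<Sum>{z} + \<Sum>{z, u} \<notin> {}" by simp
  obtain c' where c': "\<forall>v\<in>U k. c' v = c v" "\<forall>v\<in>D. c' v = d v"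
    "Inv (Suc k) c' {z, u} (HEnext {} (c (att k) + \<Sum>{z} + \<Sum>{z, u}))"
    using step[OF k inv cH' cont ln DB des] by blast
  have "HEnext {} (c (att k) + \<Sum>{z} + \<Sum>{z, u}) = {c (att k) + u}"
    unfolding l by (simp add: HEnext_def)
  then show ?thesis using c' by auto
qed

lemma step2:
  assumes k: "k < length es" and inv: "Inv k c {z, u} {l1}" and N: "card (U k) mod 4 = 2"
    and q: "q mod 4 = 1" "q \<ge> 3" and uz: "u \<noteq> z" and DB: "D \<subseteq> Bk k"
    and des: "\<forall>x. vc d D x \<le> Mf (card (U k)) q {z, u} (UNIV - {w}) x"
    and l2: "c (att k) + (z + u) + w \<noteq> l1"
  shows "\<exists>c2. (\<forall>v\<in>U k. c2 v = c v) \<and> (\<forall>v\<in>D. c2 v = d v) \<and>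
     Inv (Suc k) c2 (UNIV - {w}) {c (att k) + (z + u) + w, l1}"
proof -
  have cH': "card (UNIV - {w}) = (card (U k) + q) mod 4" using N q card_compl1[of w]
    by (simp add: mod_add_eq[symmetric])
  have cont: "card (U k) mod 4 + q \<ge> 4" using N q by simp
  have l: "c (att k) + \<Sum>{z, u} + \<Sum>(UNIV - {w}) = c (att k) + (z + u) + w"
    using uz sum_compl1[of w] by simp
  have ln: "c (att k) + \<Sum>{z, u} + \<Sum>(UNIV - {w}) \<notin> {l1}" unfolding l using l2 by simp
  have cont': "card (U k) mod 4 + q \<ge> 4 \<or> {z, u} \<subseteq> UNIV - {w}" using cont by simp
  obtain c' where c': "\<forall>v\<in>U k. c' v = c v" "\<forall>v\<in>D. c' v = d v"
    "Inv (Suc k) c' (UNIV - {w}) (HEnext {l1} (c (att k) + \<Sum>{z, u} + \<Sum>(UNIV - {w})))"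
    using step[OF k inv cH' cont' ln DB des] by blast
  have "HEnext {l1} (c (att k) + \<Sum>{z, u} + \<Sum>(UNIV - {w})) = {c (att k) + (z + u) + w, l1}"
    unfolding l by (simp add: HEnext_def)
  then show ?thesis using c' by auto
qed

lemma step3:
  assumes k: "k < length es" and inv: "Inv k c (UNIV - {w}) {l2, l1}" and N: "card (U k) mod 4 = 3"
    and q: "q mod 4 = 1" "q \<ge> 3"
    and l3: "c (att k) + w \<noteq> l1" "c (att k) + w \<noteq> l2"
  shows "\<exists>c3 H HE. Inv (Suc k) c3 H HE"
proof -
  have cH': "card ({}::klein set) = (card (U k) + q) mod 4" using N q
    by (simp add: mod_add_eq[symmetric])
  have cont: "card (U k) mod 4 + q \<ge> 4" using N q by simp
  have l: "c (att k) + \<Sum>(UNIV - {w}) + \<Sum>({}::klein set) = c (att k) + w"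
    using sum_compl1[of w] by simp
  have des: "\<forall>x. vc c {} x \<le> Mf (card (U k)) q (UNIV - {w}) {} x" by simp
  have ln: "c (att k) + \<Sum>(UNIV - {w}) + \<Sum>({}::klein set) \<notin> {l2, l1}" unfolding l using l3 by simp
  have cont': "card (U k) mod 4 + q \<ge> 4 \<or> UNIV - {w} \<subseteq> {}" using cont by simp
  have DB: "{} \<subseteq> Bk k" by simp
  show ?thesis using step[OF k inv cH' cont' ln DB des] by blast
qed

end


lemma klein_eq_iff: "(a::klein) = b \<longleftrightarrow> a + b = 0"
  by (metis add.commute add_0_right klein_add_self klein_cancel_r)

lemma kl_cancel2: "(x::klein) + (y + x) = y"
  by (metis add.commute klein_cancel_r)

lemmas kl_simps = klein_eq_iff[of _ "_ + _"] add_ac klein_cancel_r kl_cancel2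

lemma triple_conds:
  fixes c1 c2 c3 z u w :: klein
  assumes "w \<noteq> c1 + c2 + z" "w \<noteq> c1 + c3 + u" "u \<noteq> c2 + c3 + z"
  shows "c2 + (z + u) + w \<noteq> c1 + u" "c3 + w \<noteq> c1 + u" "c3 + w \<noteq> c2 + (z + u) + w"
proof -
  show "c2 + (z + u) + w \<noteq> c1 + u"
  proof
    assume "c2 + (z + u) + w = c1 + u"
    then have "(c2 + (z + u) + w) + (c2 + z + u) = (c1 + u) + (c2 + z + u)" by simp
    then have "w = c1 + c2 + z" by (simp add: add_ac klein_cancel_r kl_cancel2)
    then show False using assms by simp
  qed
  show "c3 + w \<noteq> c1 + u"
  proof
    assume "c3 + w = c1 + u"
    then have "(c3 + w) + c3 = (c1 + u) + c3" by simp
    then have "w = c1 + c3 + u" by (simp add: add_ac klein_cancel_r kl_cancel2)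
    then show False using assms by simp
  qed
  show "c3 + w \<noteq> c2 + (z + u) + w"
  proof
    assume "c3 + w = c2 + (z + u) + w"
    then have "(c3 + w) + (w + c2 + z) = (c2 + (z + u) + w) + (w + c2 + z)" by simp
    then have "u = c2 + c3 + z" by (simp add: add_ac klein_cancel_r kl_cancel2)
    then show False using assms by simp
  qed
qed

lemma swapC1: "(c3::klein) \<noteq> c1 + u + w \<Longrightarrow> w \<noteq> c1 + c3 + u"
proof
  assume a: "c3 \<noteq> c1 + u + w" and "w = c1 + c3 + u"
  then have "w + (c1 + u) = c1 + c3 + u + (c1 + u)" by simp
  then have "c3 = c1 + u + w" by (simp add: add_ac klein_cancel_r kl_cancel2)
  then show False using a by simp
qed

lemma swapC2: "(c3::klein) \<noteq> c2 + z + u \<Longrightarrow> u \<noteq> c2 + c3 + z"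
proof
  assume a: "c3 \<noteq> c2 + z + u" and "u = c2 + c3 + z"
  then have "u + (c2 + z) = c2 + c3 + z + (c2 + z)" by simp
  then have "c3 = c2 + z + u" by (simp add: add_ac klein_cancel_r kl_cancel2)
  then show False using a by simp
qed


lemma avoid2: "\<exists>y::klein. y \<noteq> a \<and> y \<noteq> b"
proof -
  have "card {a, b} < 4" by (rule le_less_trans[OF card_insert_le_m1]) (auto simp: card_insert_if)
  then obtain y where "y \<notin> {a, b}" using avoid by blast
  then show ?thesis by blast
qed

lemma avoid3: "\<exists>y::klein. y \<noteq> a \<and> y \<noteq> b \<and> y \<noteq> c"
proof -
  have "card {a, b, c} \<le> 3" by (simp add: card_insert_if)
  then have "card {a, b, c} < 4" by simp
  then obtain y where "y \<notin> {a, b, c}" using avoid by blast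
  then show ?thesis by blast
qed

context tord begin

lemma finish_nonC:
  assumes k: "Suc (Suc k) < length es" and inv: "Inv (Suc k) c1 {z, u} {l1}" and uz: "u \<noteq> z"
    and N: "card (U (Suc k)) mod 4 = 2" and q: "q mod 4 = 1" "q \<ge> 3"
    and a3: "att (Suc (Suc k)) \<in> U (Suc k)"
    and l1: "l1 = c1v + u"
    and ucond: "u \<noteq> c1 (att (Suc k)) + c1 (att (Suc (Suc k))) + z"
  shows "\<exists>c' H' HE'. Inv (Suc (Suc (Suc k))) c' H' HE'"
proof -
  define c2v where "c2v = c1 (att (Suc k))"
  define c3v where "c3v = c1 (att (Suc (Suc k)))"
  obtain w where w: "w \<noteq> c1v + c2v + z" "w \<noteq> c1v + c3v + u" using avoid2 by blast
  have tc: "c2v + (z + u) + w \<noteq> c1v + u" "c3v + w \<noteq> c1v + u" "c3v + w \<noteq> c2v + (z + u) + w"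
    using triple_conds[OF w] ucond unfolding c2v_def c3v_def by auto
  have k1: "Suc k < length es" using k by simp
  have des: "\<forall>x. vc c1 {} x \<le> Mf (card (U (Suc k))) q {z, u} (UNIV - {w}) x" by simp
  obtain c2 where c2: "\<forall>v\<in>U (Suc k). c2 v = c1 v"
    "Inv (Suc (Suc k)) c2 (UNIV - {w}) {c1 (att (Suc k)) + (z + u) + w, l1}"
    using step2[OF k1 inv N q uz _ des] tc(1) l1 unfolding c2v_def by auto
  have c2a3: "c2 (att (Suc (Suc k))) = c3v" using c2(1) a3 unfolding c3v_def by simp
  have N2: "card (U (Suc (Suc k))) mod 4 = 3"
  proof -
    have "card (U (Suc (Suc k))) = card (U (Suc k)) + q" using card_U[of "Suc k"] card_U[of "Suc (Suc k)"] k by simp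
    then show ?thesis using N q by (simp add: mod_add_eq[symmetric])
  qed
  show ?thesis
    using step3[OF k c2(2) N2 q] c2a3 tc(2,3) l1 unfolding c2v_def by auto
qed

end


lemma des_ok:
  assumes fD: "finite D" and N: "N mod 4 = 1" and q: "q \<ge> 3" and uz: "u \<noteq> z"
    and D: "card D \<le> 1 \<or> ((\<forall>v\<in>D. d v = u) \<and> card D \<le> 2)"
  shows "\<forall>x. vc d D x \<le> Mf N q {z} {z, u} x"
proof
  fix x
  show "vc d D x \<le> Mf N q {z} {z, u} x"
  proof (cases "card D \<le> 1")
    case True
    then show ?thesis using vc_le_card[OF fD, of d x] Mf1(1)[OF N q uz, of x] by linarith
  next
    case False
    then have all: "\<forall>v\<in>D. d v = u" and c2: "card D \<le> 2" using D by auto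
    show ?thesis
    proof (cases "x = u")
      case True
      then show ?thesis using vc_le_card[OF fD, of d u] Mf1(2)[OF N q uz] c2 by simp
    next
      case False
      then have "{v\<in>D. d v = x} = {}" using all by auto
      then have "vc d D x = 0" unfolding vc_def by (simp only: card.empty)
      then show ?thesis by simp
    qed
  qed
qed

lemma vc_single_const: "vc (\<lambda>_. y) {a} x = (if y = x then 1 else 0)"
  unfolding vc_def by auto

context tord begin

lemma finish_C:
  assumes k: "Suc (Suc k) < length es" and inv: "Inv (Suc k) c1 {z, u} {l1}" and uz: "u \<noteq> z"
    and N: "card (U (Suc k)) mod 4 = 2" and q: "q mod 4 = 1" "q \<ge> 3"
    and a3: "att (Suc (Suc k)) \<in> Bk (Suc k)"
    and l1: "l1 = c1v + u"
  shows "\<exists>c' H' HE'. Inv (Suc (Suc (Suc k))) c' H' HE'"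
proof -
  define c2v where "c2v = c1 (att (Suc k))"
  obtain w where w: "w \<noteq> c1v + c2v + z" using avoid2 by blast
  obtain c3v where c3: "c3v \<noteq> w" "c3v \<noteq> c1v + u + w" "c3v \<noteq> c2v + z + u" using avoid3 by blast
  have w2: "w \<noteq> c1v + c3v + u" using swapC1[OF c3(2)] .
  have uc: "u \<noteq> c2v + c3v + z" using swapC2[OF c3(3)] .
  have tc: "c2v + (z + u) + w \<noteq> c1v + u" "c3v + w \<noteq> c1v + u" "c3v + w \<noteq> c2v + (z + u) + w"
    using triple_conds[OF w w2 uc] by auto
  have k1: "Suc k < length es" using k by simp
  have des: "\<forall>x. vc (\<lambda>_. c3v) {att (Suc (Suc k))} x \<le> Mf (card (U (Suc k))) q {z, u} (UNIV - {w}) x"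
  proof
    fix x show "vc (\<lambda>_. c3v) {att (Suc (Suc k))} x \<le> Mf (card (U (Suc k))) q {z, u} (UNIV - {w}) x"
      using Mf2[OF N, of q x w] q c3(1) unfolding vc_single_const by auto
  qed
  have DB: "{att (Suc (Suc k))} \<subseteq> Bk (Suc k)" using a3 by simp
  obtain c2 where c2: "\<forall>v\<in>{att (Suc (Suc k))}. c2 v = c3v"
    "Inv (Suc (Suc k)) c2 (UNIV - {w}) {c1 (att (Suc k)) + (z + u) + w, l1}"
    using step2[OF k1 inv N q uz DB des] tc(1) l1 unfolding c2v_def by auto
  have c2a3: "c2 (att (Suc (Suc k))) = c3v" using c2(1) by simp
  have N2: "card (U (Suc (Suc k))) mod 4 = 3"
  proof -
    have "card (U (Suc (Suc k))) = card (U (Suc k)) + q" using card_U[of "Suc k"] card_U[of "Suc (Suc k)"] k by simp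
    then show ?thesis using N q by (simp add: mod_add_eq[symmetric])
  qed
  show ?thesis
    using step3[OF k c2(2) N2 q] c2a3 tc(2,3) l1 unfolding c2v_def by auto
qed

end


context tord begin

lemma U_mod_next:
  assumes "Suc k \<le> length es" "card (U k) mod 4 = m" "q mod 4 = 1"
  shows "card (U (Suc k)) mod 4 = Suc m mod 4"
proof -
  have "card (U (Suc k)) = card (U k) + q" using card_U[of k] card_U[of "Suc k"] assms(1) by simp
  then show ?thesis using assms(2,3) by (simp add: mod_add_eq[symmetric])
qed

lemma triple:
  assumes k: "k + 3 \<le> length es" and inv: "Inv k c H HE" and k4: "k mod 4 = 0"
    and q: "q mod 4 = 1" "q \<ge> 3"
  shows "\<exists>c' H' HE'. Inv (Suc (Suc (Suc k))) c' H' HE'"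
proof -
  have k0: "k < length es" and k1: "Suc k < length es" and k2: "Suc (Suc k) < length es" using k by auto
  have N: "card (U k) mod 4 = 1"
    using card_U[of k] k mod_expand[of k q] k4 by simp
  have N1: "card (U (Suc k)) mod 4 = 2" using U_mod_next[of k 1] N q k by simp
  have cH: "card H = 1" and cHE: "card HE = 0"
    using inv N k4 unfolding Inv_def BalF_def by auto
  obtain z where Hz: "H = {z}" using cH card_1_singletonE by blast
  have HE0: "HE = {}" using cHE by simp
  have inv0: "Inv k c {z} {}" using inv Hz HE0 by simp
  define a2 where "a2 = att (Suc k)"
  define a3 where "a3 = att (Suc (Suc k))"
  have a2U: "a2 \<in> U k \<or> a2 \<in> Bk k" using attU[OF k1] U_Suc[OF k0] unfolding a2_def by auto
  have a3U: "a3 \<in> U (Suc k) \<or> a3 \<in> Bk (Suc k)" using attU[OF k2] U_Suc[OF k1] unfolding a3_def by auto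
  have fB: "finite (Bk k)" using k0 by simp
  have emp: "\<forall>x. vc c {} x \<le> Mf (card (U k)) q {z} {z, u} x" for u by simp
  show ?thesis
  proof (cases "a3 \<in> Bk (Suc k)")
    case True
    obtain u where uz: "u \<noteq> z" using avoid2 by blast
    obtain c1 where c1: "Inv (Suc k) c1 {z, u} {c (att k) + u}"
      using step1[OF k0 inv0 N q uz _ emp] by auto
    show ?thesis using finish_C[OF k2 c1 uz N1 q True[unfolded a3_def]] by blast
  next
    case False
    then have a3U': "a3 \<in> U k \<or> a3 \<in> Bk k" using a3U U_Suc[OF k0] by auto
    have a3S: "a3 \<in> U (Suc k)" using a3U' U_Suc[OF k0] by auto
    have "\<exists>u c1. u \<noteq> z \<and> Inv (Suc k) c1 {z, u} {c (att k) + u} \<and> u \<noteq> c1 a2 + c1 a3 + z"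
    proof (cases "a2 \<in> U k")
      case a2: True
      show ?thesis
      proof (cases "a3 \<in> U k")
        case a3: True
        obtain u where u: "u \<noteq> z" "u \<noteq> c a2 + c a3 + z" using avoid2 by blast
        obtain c1 where c1: "\<forall>v\<in>U k. c1 v = c v" "Inv (Suc k) c1 {z, u} {c (att k) + u}"
          using step1[OF k0 inv0 N q u(1) _ emp] by auto
        have "c1 a2 = c a2" "c1 a3 = c a3" using c1(1) a2 a3 by auto
        then show ?thesis using u c1(2) by (intro exI[of _ u] exI[of _ c1]) simp
      next
        case a3: False
        then have a3B: "a3 \<in> Bk k" using a3U' by simp
        obtain u where u: "u \<noteq> z" using avoid2 by blast
        have des: "\<forall>x. vc (\<lambda>_. c a2) {a3} x \<le> Mf (card (U k)) q {z} {z, u} x"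
          by (rule des_ok[OF _ N q(2) u]) auto
        obtain c1 where c1: "\<forall>v\<in>U k. c1 v = c v" "\<forall>v\<in>{a3}. c1 v = c a2"
            "Inv (Suc k) c1 {z, u} {c (att k) + u}"
          using step1[OF k0 inv0 N q u _ des] a3B by auto
        have "c1 a2 + c1 a3 + z = z" using c1 a2 by simp
        then show ?thesis using u c1 by (intro exI[of _ u] exI[of _ c1]) simp
      qed
    next
      case a2: False
      then have a2B: "a2 \<in> Bk k" using a2U by simp
      show ?thesis
      proof (cases "a3 \<in> U k")
        case a3: True
        obtain u where u: "u \<noteq> z" using avoid2 by blast
        have des: "\<forall>x. vc (\<lambda>_. c a3) {a2} x \<le> Mf (card (U k)) q {z} {z, u} x"
          by (rule des_ok[OF _ N q(2) u]) auto
        obtain c1 where c1: "\<forall>v\<in>U k. c1 v = c v" "\<forall>v\<in>{a2}. c1 v = c a3"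
            "Inv (Suc k) c1 {z, u} {c (att k) + u}"
          using step1[OF k0 inv0 N q u _ des] a2B by auto
        have "c1 a2 + c1 a3 + z = z" using c1 a3 by simp
        then show ?thesis using u c1 by (intro exI[of _ u] exI[of _ c1]) simp
      next
        case a3: False
        then have a3B: "a3 \<in> Bk k" using a3U' by simp
        obtain u where u: "u \<noteq> z" using avoid2 by blast
        have cD: "card {a2, a3} \<le> 2" by (simp add: card_insert_if)
        have des: "\<forall>x. vc (\<lambda>_. u) {a2, a3} x \<le> Mf (card (U k)) q {z} {z, u} x"
          by (rule des_ok[OF _ N q(2) u]) (use cD in auto)
        obtain c1 where c1: "\<forall>v\<in>{a2, a3}. c1 v = u" "Inv (Suc k) c1 {z, u} {c (att k) + u}"
          using step1[OF k0 inv0 N q u _ des] a2B a3B by auto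
        have "c1 a2 + c1 a3 + z = z" using c1 by simp
        then show ?thesis using u c1 by (intro exI[of _ u] exI[of _ c1]) simp
      qed
    qed
    then obtain u c1 where u: "u \<noteq> z" and c1: "Inv (Suc k) c1 {z, u} {c (att k) + u}"
      and uc: "u \<noteq> c1 a2 + c1 a3 + z" by blast
    show ?thesis
      using finish_nonC[OF k2 c1 u N1 q a3S[unfolded a3_def] _ uc[unfolded a2_def a3_def]] by blast
  qed
qed

end


lemma BalF_abs: "BalF f N H \<Longrightarrow> \<bar>int (f a) - int (f b)\<bar> \<le> 1"
proof -
  assume "BalF f N H"
  then have "f a = N div 4 + of_bool (a \<in> H)" "f b = N div 4 + of_bool (b \<in> H)"
    unfolding BalF_def by blast+
  then show ?thesis by (auto simp: of_bool_def)
qed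

context tord begin

lemma single_exists:
  assumes k: "k < length es" and inv: "Inv k c H HE" and q: "q \<ge> 2"
    and nb: "\<not> (q mod 4 = 1 \<and> k mod 4 = 2)"
  shows "\<exists>c' H' HE'. Inv (Suc k) c' H' HE'"
proof -
  define N where "N = card (U k)"
  have cH: "card H = N mod 4" and cHE: "card HE = k mod 4"
    using inv unfolding Inv_def BalF_def N_def by auto
  have NN: "N mod 4 = (1 + k * q) mod 4" using card_U[of k] k unfolding N_def by simp
  have gd: "good (N mod 4) (k mod 4) q" unfolding NN by (rule good_arith[OF q nb])
  obtain H' where H': "card H' = (N mod 4 + q) mod 4" "N mod 4 + q \<ge> 4 \<or> H \<subseteq> H'"
    "c (att k) + \<Sum>H + \<Sum>H' \<notin> HE"
    using choose_single[OF cH cHE q gd, where t = "c (att k)"] cHE by auto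
  have cH': "card H' = (card (U k) + q) mod 4" using H'(1) unfolding N_def by (simp add: mod_add_left_eq)
  have des: "\<forall>x. vc c {} x \<le> Mf (card (U k)) q H H' x" by simp
  have DB: "{} \<subseteq> Bk k" by simp
  show ?thesis using step[OF k inv cH' H'(2)[unfolded N_def] H'(3) DB des] by blast
qed

lemma base: "Inv 0 (\<lambda>_. 0) {0} {}"
proof -
  have U0: "U 0 = {r}" by (simp add: Uo_def)
  have "\<forall>x. vc (\<lambda>_. 0) {r} x = 1 div 4 + of_bool (x \<in> {0})"
    unfolding vc_def by auto
  moreover have "\<forall>x. ec (\<lambda>_. 0) (set (take 0 es)) x = 0 div 4 + of_bool (x \<in> {})"
    unfolding ec_def by simp
  ultimately show ?thesis unfolding Inv_def BalF_def U0 by simp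
qed

lemma all_k:
  assumes q: "q \<ge> 2"
  shows "k \<le> length es \<Longrightarrow> \<exists>c H HE. Inv k c H HE"
proof (induction k rule: less_induct)
  case (less k)
  show ?case
  proof (cases k)
    case 0 then show ?thesis using base by blast
  next
    case (Suc k')
    show ?thesis
    proof (cases "q mod 4 = 1 \<and> k' mod 4 = 2")
      case True
      then have k3: "k \<ge> 3" "(k - 3) mod 4 = 0" using Suc by presburger+
      have "\<exists>c H HE. Inv (k - 3) c H HE" using less.IH[of "k - 3"] less.prems k3 by simp
      then obtain c H HE where inv: "Inv (k - 3) c H HE" by blast
      have "q \<ge> 3" using True q by presburger
      then have "\<exists>c' H' HE'. Inv (Suc (Suc (Suc (k - 3)))) c' H' HE'"
        using triple[OF _ inv k3(2)] True less.prems k3 by auto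
      moreover have "Suc (Suc (Suc (k - 3))) = k" using k3 by simp
      ultimately show ?thesis by simp
    next
      case False
      have "\<exists>c H HE. Inv k' c H HE" using less.IH[of k'] less.prems Suc by simp
      then obtain c H HE where inv: "Inv k' c H HE" by blast
      show ?thesis using single_exists[OF _ inv q False] less.prems Suc by auto
    qed
  qed
qed

end

theorem theorem3:
  fixes V :: "'a set" and E :: "'a set set" and p :: nat
  assumes "p \<ge> 3"
    and "hypertree V E"
    and "uniform p V E"
  shows "A_cordial V E"
proof -
  have ht: "hypertree V E" using assms(2) .
  have hg: "hypergraph V E" and finV: "finite V" and Ene: "E \<noteq> {}"
    using ht unfolding hypertree_def by auto
  obtain e0 where e0: "e0 \<in> E" using Ene by blast
  obtain r where r: "r \<in> e0" using hg e0 unfolding hypergraph_def by blast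
  have rV: "r \<in> V" using hg e0 r unfolding hypergraph_def by blast
  obtain es where es: "pre_ok V E r es" "set es = E" "Uo r es (length es) = V"
    using order_exists[OF ht rV] by blast
  define q where "q = p - 1"
  have q2: "q \<ge> 2" using assms(1) unfolding q_def by simp
  have cq: "\<And>e. e \<in> set es \<Longrightarrow> card e = Suc q"
    using assms(1,3) es(2) unfolding uniform_def q_def by auto
  interpret tord V E r es q
    by unfold_locales (use hg rV es(1) cq finV in auto)
  obtain c H HE where inv: "Inv (length es) c H HE" using all_k[OF q2] by blast
  have bv: "BalF (vc c V) (card V) H" and be: "BalF (ec c E) (length es) HE"
    using inv es(2,3) unfolding Inv_def by auto
  have "A_friendly V c"
    unfolding A_friendly_def vcount_def using BalF_abs[OF bv] unfolding vc_def by blast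
  moreover have "\<forall>a b. \<bar>int (ecount E c a) - int (ecount E c b)\<bar> \<le> 1"
    unfolding ecount_def using BalF_abs[OF be] unfolding ec_def by blast
  ultimately show ?thesis unfolding A_cordial_def by blast
qed


end
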